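(* Let $\mathbf{X}\in\mathbb{R}^{n\times p}$, $\mathbf{A}\in\mathbb{R}^n$ with $\mathbf{A}\neq\mathbf{0}$, and $\mathbf{Y}\in\mathbb{R}^n$ be given, and define $\mathbf{Q}_A=I_n-\mathbf{A}\mathbf{A}^\top/\|\mathbf{A}\|^2$, $\mathbf{Z}=\mathbf{Q}_A\mathbf{X}$, $\mathbf{a}=\mathbf{X}^\top\mathbf{A}$, $\mathbf{z}=\mathbf{X}^\top\mathbf{Y}-\frac{\mathbf{A}^\top\mathbf{Y}}{\|\mathbf{A}\|^2}\mathbf{a}$ $(=\mathbf{Z}^\top\mathbf{Y})$, and $\mathbf{V}=\mathbf{X}^\top\mathbf{X}-\mathbf{a}\mathbf{a}^\top/\|\mathbf{A}\|^2$ $(=\mathbf{Z}^\top\mathbf{Z})$. Assume $\mathbf{V}$ is positive definite and let $\mathbf{p}=\mathbf{V}^{-1}\mathbf{a}$, $\mathbf{q}=\mathbf{V}^{-1}\mathbf{z}$, both assumed nonzero. Equip $\mathbb{R}^p$ with the inner product $\langle\mathbf{u}_1,\mathbf{u}_2\rangle_{\mathbf{V}}=\mathbf{u}_1^\top\mathbf{V}\mathbf{u}_2$, norm $\|\mathbf{u}\|_{\mathbf{V}}=\sqrt{\mathbf{u}^\top\mathbf{V}\mathbf{u}}$, and angle $\angle_{\mathbf{V}}(\mathbf{u}_1,\mathbf{u}_2)$ defined by $\cos\angle_{\mathbf{V}}(\mathbf{u}_1,\mathbf{u}_2)=\langle\mathbf{u}_1,\mathbf{u}_2\rangle_{\mathbf{V}}/(\|\mathbf{u}_1\|_{\mathbf{V}}\|\mathbf{u}_2\|_{\mathbf{V}})$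 for nonzero vectors. Let $\varphi=\angle_{\mathbf{V}}(\mathbf{p},\mathbf{q})$. Then, over nonzero $\mathbf{w}\in\mathbb{R}^p$, the alignment $\cos\angle_{\mathbf{V}}(\mathbf{w},\mathbf{p})\cdot\cos\angle_{\mathbf{V}}(\mathbf{w},\mathbf{q})$ is maximised by the direction $\mathbf{w}^*$ that bisects the angle between $\mathbf{p}$ and $\mathbf{q}$, i.e. $\angle_{\mathbf{V}}(\mathbf{w}^*,\mathbf{p})=\angle_{\mathbf{V}}(\mathbf{w}^*,\mathbf{q})=\varphi/2$, and for the function $$h(\mathbf{w})=\frac{(\mathbf{w}^\top\mathbf{a})(\mathbf{w}^\top\mathbf{z})}{\|\mathbf{A}\|^2\,(\mathbf{w}^\top\mathbf{V}\mathbf{w})}$$ one has $$h(\mathbf{w}^* )=\frac{\|\mathbf{p}\|_{\mathbf{V}}\|\mathbf{q}\|_{\mathbf{V}}}{\|\mathbf{A}\|^2}\cdot\frac{1+\cos\varphi}{2}.$$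
   Context: $\mathbf{X}$ is a matrix of candidate mediators, $\mathbf{A}$ a treatment vector and $\mathbf{Y}$ an outcome vector (all column-centred). For a weight vector $\mathbf{w}$, the OLS path coefficients of the composite mediator $\mathbf{X}\mathbf{w}$ are $\hat\alpha(\mathbf{w})=\mathbf{w}^\top\mathbf{a}/\|\mathbf{A}\|^2$ and $\hat\beta(\mathbf{w})=\mathbf{w}^\top\mathbf{z}/(\mathbf{w}^\top\mathbf{V}\mathbf{w})$, so $h(\mathbf{w})=\hat\alpha(\mathbf{w})\hat\beta(\mathbf{w})$ is the sample indirect effect; $h$ is invariant under rescaling of $\mathbf{w}$ by nonzero scalars. The identity $h(\mathbf{w})=\frac{\|\mathbf{p}\|_{\mathbf{V}}\|\mathbf{q}\|_{\mathbf{V}}}{\|\mathbf{A}\|^2}\cos\angle_{\mathbf{V}}(\mathbf{w},\mathbf{p})\cos\angle_{\mathbf{V}}(\mathbf{w},\mathbf{q})$ holds for nonzero $\mathbf{w}$. *)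

theory Defs
  imports "HOL-Analysis.Analysis"
begin

definition outer :: "real^'p \<Rightarrow> real^'p \<Rightarrow> real^'p^'p" where
  "outer u v = (\<chi> i j. u$i * v$j)"

definition pos_definite :: "real^'p^'p \<Rightarrow> bool" where
  "pos_definite V \<longleftrightarrow> transpose V = V \<and> (\<forall>u. u \<noteq> 0 \<longrightarrow> u \<bullet> (V *v u) > 0)"

definition vinner :: "real^'p^'p \<Rightarrow> real^'p \<Rightarrow> real^'p \<Rightarrow> real" where
  "vinner V u1 u2 = u1 \<bullet> (V *v u2)"

definition vnorm :: "real^'p^'p \<Rightarrow> real^'p \<Rightarrow> real" where
  "vnorm V u = sqrt (vinner V u u)"

definition vcos :: "real^'p^'p \<Rightarrow> real^'p \<Rightarrow> real^'p \<Rightarrow> real" where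
  "vcos V u1 u2 = vinner V u1 u2 / (vnorm V u1 * vnorm V u2)"

definition vangle :: "real^'p^'p \<Rightarrow> real^'p \<Rightarrow> real^'p \<Rightarrow> real" where
  "vangle V u1 u2 = arccos (vcos V u1 u2)"

definition hfun :: "real^'n \<Rightarrow> real^'p \<Rightarrow> real^'p \<Rightarrow> real^'p^'p \<Rightarrow> real^'p \<Rightarrow> real" where
  "hfun A a z V w = (w \<bullet> a) * (w \<bullet> z) / ((norm A)\<^sup>2 * (w \<bullet> (V *v w)))"

end

theory Submission
  imports Defs
begin

lemma vinner_sym:
  assumes "transpose V = V"
  shows "vinner V u w = vinner V w u"
proof -
  have "u \<bullet> (V *v w) = (u v* V) \<bullet> w" by (simp add: dot_lmul_matrix)
  also have "u v* V = V *v u" by (metis assms vector_transpose_matrix)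
  finally show ?thesis unfolding vinner_def by (simp add: inner_commute)
qed

lemma vinner_add_left: "vinner V (u + v) w = vinner V u w + vinner V v w"
  by (simp add: vinner_def inner_add_left)
lemma vinner_add_right: "vinner V w (u + v) = vinner V w u + vinner V w v"
  by (simp add: vinner_def matrix_vector_right_distrib inner_add_right)
lemma vinner_scale_left: "vinner V (c *\<^sub>R u) w = c * vinner V u w"
  by (simp add: vinner_def)
lemma vinner_scale_right: "vinner V w (c *\<^sub>R u) = c * vinner V w u"
  by (simp add: vinner_def matrix_vector_mult_scaleR)

lemma vinner_expand:
  assumes "transpose V = V"
  shows "vinner V (a *\<^sub>R x + b *\<^sub>R y) (a *\<^sub>R x + b *\<^sub>R y)
     = a\<^sup>2 * vinner V x x + 2 * a * b * vinner V x y + b\<^sup>2 * vinner V y y"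
  using vinner_sym[OF assms, of y x]
  by (simp add: vinner_add_left vinner_add_right vinner_scale_left vinner_scale_right
      algebra_simps power2_eq_square)

lemma vinner_pos:
  assumes "pos_definite V" "u \<noteq> 0" shows "vinner V u u > 0"
  using assms by (simp add: pos_definite_def vinner_def)

lemma vinner_nonneg:
  assumes "pos_definite V" shows "vinner V u u \<ge> 0"
  using vinner_pos[OF assms, of u] by (cases "u = 0") (auto simp: vinner_def)

lemma vinner_zero:
  assumes "pos_definite V" "vinner V u u = 0" shows "u = 0"
  using vinner_pos[OF assms(1), of u] assms(2) by fastforce

lemma vcs:
  assumes pd: "pos_definite V"
  shows "(vinner V u w)\<^sup>2 \<le> vinner V u u * vinner V w w"
proof (cases "w = 0")
  case True then show ?thesis by (simp add: vinner_def)
next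
  case False
  have sym: "transpose V = V" using pd by (simp add: pos_definite_def)
  let ?t = "vinner V u w / vinner V w w"
  have ww: "vinner V w w > 0" using vinner_pos[OF pd False] .
  have "0 \<le> vinner V (1 *\<^sub>R u + (-?t) *\<^sub>R w) (1 *\<^sub>R u + (-?t) *\<^sub>R w)" by (rule vinner_nonneg[OF pd])
  also have "\<dots> = vinner V u u - 2 * ?t * vinner V u w + ?t^2 * vinner V w w"
    unfolding vinner_expand[OF sym] by (simp add: power2_eq_square)
  also have "\<dots> = vinner V u u - (vinner V u w)\<^sup>2 / vinner V w w"
    using ww by (simp add: field_simps power2_eq_square)
  finally show ?thesis using ww by (simp add: field_simps)
qed

lemma vcos_bound:
  assumes pd: "pos_definite V" and "u \<noteq> 0" "w \<noteq> 0"
  shows "\<bar>vcos V u w\<bar> \<le> 1"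
proof -
  have u: "vinner V u u > 0" and w: "vinner V w w > 0" using vinner_pos assms by auto
  have "\<bar>vinner V u w\<bar> \<le> sqrt (vinner V u u * vinner V w w)"
    using vcs[OF pd, of u w] by (metis real_le_rsqrt real_sqrt_abs abs_ge_zero power2_abs)
  then show ?thesis using u w
    by (simp add: vcos_def vnorm_def real_sqrt_mult abs_div divide_le_eq_1 abs_mult)
qed

lemma vnorm_sq:
  assumes "pos_definite V" shows "(vnorm V u)\<^sup>2 = vinner V u u"
  using vinner_nonneg[OF assms] by (simp add: vnorm_def)

lemma vnorm_pos:
  assumes "pos_definite V" "u \<noteq> 0" shows "vnorm V u > 0"
  using vinner_pos[OF assms] by (simp add: vnorm_def)

lemma half_cos_sq:
  assumes "\<bar>x\<bar> \<le> (1::real)"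
  shows "(cos (arccos x / 2))\<^sup>2 = (1 + x) / 2"
proof -
  have "cos (2 * (arccos x / 2)) = 2 * (cos (arccos x / 2))\<^sup>2 - 1" by (rule cos_double_cos)
  then show ?thesis using cos_arccos_abs[OF assms] by simp
qed

lemma half_angle:
  assumes "-1 \<le> x" "x \<le> (1::real)"
  shows "arccos (sqrt ((1 + x) / 2)) = arccos x / 2"
proof -
  have b: "0 \<le> arccos x" "arccos x \<le> pi" using arccos_bounded assms by auto
  have c0: "cos (arccos x / 2) \<ge> 0" using b by (intro cos_ge_zero) auto
  have "sqrt ((1 + x) / 2) = cos (arccos x / 2)"
    using half_cos_sq[of x] assms c0 by (metis abs_le_iff minus_le_iff real_sqrt_unique)
  then show ?thesis using b by (simp add: arccos_cos)
qed

lemma key_ineq: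
  assumes pd: "pos_definite V" and p: "p \<noteq> 0" and q: "q \<noteq> 0" and w: "w \<noteq> 0"
  shows "vcos V w p * vcos V w q \<le> (1 + vcos V p q) / 2"
proof -
  have sym: "transpose V = V" using pd by (simp add: pos_definite_def)
  define P where "P = vinner V w p"
  define Q where "Q = vinner V w q"
  define c where "c = vinner V p q"
  define np where "np = vnorm V p"
  define nq where "nq = vnorm V q"
  define nw where "nw = vnorm V w"
  have np: "np > 0" and nq: "nq > 0" and nw: "nw > 0"
    using vnorm_pos[OF pd] p q w by (auto simp: np_def nq_def nw_def)
  have np2: "vinner V p p = np^2" and nq2: "vinner V q q = nq^2" and nw2: "vinner V w w = nw^2"
    using vnorm_sq[OF pd] by (auto simp: np_def nq_def nw_def)
  define s where "s = nq *\<^sub>R p + np *\<^sub>R q"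
  have ws: "vinner V w s = nq * P + np * Q"
    by (simp add: s_def vinner_add_right vinner_scale_right P_def Q_def)
  have ss: "vinner V s s = 2 * np^2 * nq^2 + 2 * np * nq * c"
    unfolding s_def vinner_expand[OF sym] np2 nq2 c_def by (simp add: algebra_simps power2_eq_square)
  have cs: "(nq * P + np * Q)^2 \<le> nw^2 * (2 * np^2 * nq^2 + 2 * np * nq * c)"
    using vcs[OF pd, of w s] ws ss nw2 by simp
  have amgm: "4 * (np * nq) * (P * Q) \<le> (nq * P + np * Q)^2"
    using sum_squares_ge_zero[of "nq * P - np * Q" 0] by (simp add: power2_eq_square algebra_simps)
  have "4 * (np * nq) * (P * Q) \<le> 4 * (np * nq) * (nw^2 * (np * nq + c) / 2)"
    using cs amgm by (simp add: algebra_simps power2_eq_square)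
  moreover have "4 * (np * nq) > 0" using np nq by simp
  ultimately have PQ: "P * Q \<le> nw^2 * (np * nq + c) / 2"
    using mult_le_cancel_left_pos by blast
  have "vcos V w p * vcos V w q = (P * Q) / (nw^2 * (np * nq))"
    by (simp add: vcos_def P_def Q_def nw_def np_def nq_def power2_eq_square)
  also have "\<dots> \<le> (nw^2 * (np * nq + c) / 2) / (nw^2 * (np * nq))"
    using PQ np nq nw by (intro divide_right_mono) auto
  also have "\<dots> = (1 + vcos V p q) / 2"
    using np nq nw by (simp add: vcos_def c_def np_def[symmetric] nq_def[symmetric] field_simps)
  finally show ?thesis .
qed

lemma vcos_from_angle:
  assumes pd: "pos_definite V" "u \<noteq> 0" "w \<noteq> 0" "vangle V u w = t"
  shows "vcos V u w = cos t"
  using assms cos_arccos_abs[OF vcos_bound[OF assms(1-3)]] by (simp add: vangle_def)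

theorem proposition1:
  fixes X :: "real^'p^'n" and A Y :: "real^'n"
    and a z p q :: "real^'p" and V :: "real^'p^'p" and \<phi> :: real
  assumes "A \<noteq> 0"
    and "a = transpose X *v A"
    and "z = transpose X *v Y - ((A \<bullet> Y) / (norm A)\<^sup>2) *\<^sub>R a"
    and "V = transpose X ** X - (1 / (norm A)\<^sup>2) *\<^sub>R outer a a"
    and "pos_definite V"
    and "p = matrix_inv V *v a" and "q = matrix_inv V *v z"
    and "p \<noteq> 0" and "q \<noteq> 0"
    and "\<phi> = vangle V p q"
  shows "(\<forall>ws. ws \<noteq> 0 \<and> vangle V ws p = \<phi> / 2 \<and> vangle V ws q = \<phi> / 2 \<longrightarrow>
            (\<forall>w. w \<noteq> 0 \<longrightarrow> vcos V w p * vcos V w q \<le> vcos V ws p * vcos V ws q)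
          \<and> hfun A a z V ws = vnorm V p * vnorm V q / (norm A)\<^sup>2 * ((1 + cos \<phi>) / 2))
       \<and> ((\<phi> < pi \<or> CARD('p) \<ge> 2) \<longrightarrow>
            (\<exists>ws. ws \<noteq> 0 \<and> vangle V ws p = \<phi> / 2 \<and> vangle V ws q = \<phi> / 2))"
proof -
  note pd = assms(5)
  have sym: "transpose V = V" using pd by (simp add: pos_definite_def)
  have inj: "inj ((*v) V)"
  proof (rule injI)
    fix x y assume "V *v x = V *v y"
    then have "V *v (x - y) = 0" by (simp add: matrix_vector_mult_diff_distrib)
    then have "vinner V (x - y) (x - y) = 0" by (simp add: vinner_def)
    then have "x - y = 0" by (rule vinner_zero[OF pd])
    then show "x = y" by simp
  qed
  then have "invertible V"
    using matrix_left_invertible_injective invertible_left_inverse by blast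
  then have "V ** matrix_inv V = mat 1"
    unfolding invertible_def matrix_inv_def by (rule someI_ex[THEN conjunct1])
  then have Vp: "V *v p = a" and Vq: "V *v q = z"
    using assms(6,7) by (simp_all add: matrix_vector_mul_assoc)
  have bpq: "\<bar>vcos V p q\<bar> \<le> 1" using vcos_bound[OF pd assms(8,9)] .
  have cphi: "cos \<phi> = vcos V p q"
    using assms(10) cos_arccos_abs[OF bpq] by (simp add: vangle_def)
  have np: "vnorm V p > 0" and nq: "vnorm V q > 0"
    using vnorm_pos[OF pd] assms(8,9) by auto
  have A2: "(norm A)\<^sup>2 > 0" using assms(1) by simp
  have part1: "(\<forall>w. w \<noteq> 0 \<longrightarrow> vcos V w p * vcos V w q \<le> vcos V ws p * vcos V ws q)
          \<and> hfun A a z V ws = vnorm V p * vnorm V q / (norm A)\<^sup>2 * ((1 + cos \<phi>) / 2)"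
    if ws: "ws \<noteq> 0" "vangle V ws p = \<phi> / 2" "vangle V ws q = \<phi> / 2" for ws
  proof -
    have c1: "vcos V ws p = cos (\<phi> / 2)" using vcos_from_angle[OF pd ws(1) assms(8) ws(2)] .
    have c2: "vcos V ws q = cos (\<phi> / 2)" using vcos_from_angle[OF pd ws(1) assms(9) ws(3)] .
    have prod: "vcos V ws p * vcos V ws q = (1 + vcos V p q) / 2"
      using c1 c2 half_cos_sq[OF bpq] assms(10) by (simp add: vangle_def power2_eq_square)
    have nws: "vnorm V ws > 0" using vnorm_pos[OF pd ws(1)] .
    have nws2: "ws \<bullet> (V *v ws) = (vnorm V ws)\<^sup>2" using vnorm_sq[OF pd, of ws] by (simp add: vinner_def)
    have "hfun A a z V ws = vinner V ws p * vinner V ws q / ((norm A)\<^sup>2 * (vnorm V ws)\<^sup>2)"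
      by (simp add: hfun_def vinner_def Vp Vq nws2)
    also have "\<dots> = vnorm V p * vnorm V q / (norm A)\<^sup>2 * (vcos V ws p * vcos V ws q)"
      using np nq nws A2 by (simp add: vcos_def field_simps power2_eq_square)
    finally have "hfun A a z V ws = vnorm V p * vnorm V q / (norm A)\<^sup>2 * ((1 + cos \<phi>) / 2)"
      using prod cphi by simp
    then show ?thesis using key_ineq[OF pd assms(8,9)] prod by (simp only:) auto
  qed
  have part2: "\<exists>ws. ws \<noteq> 0 \<and> vangle V ws p = \<phi> / 2 \<and> vangle V ws q = \<phi> / 2"
    if h: "\<phi> < pi \<or> CARD('p) \<ge> 2"
  proof -
    define x where "x = vcos V p q"
    define np where "np = vnorm V p"
    define nq where "nq = vnorm V q"
    have np2: "vinner V p p = np^2" and nq2: "vinner V q q = nq^2"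
      using vnorm_sq[OF pd] by (auto simp: np_def nq_def)
    have c: "vinner V p q = x * np * nq"
      using np nq by (simp add: x_def vcos_def np_def nq_def)
    have cq: "vinner V q p = x * np * nq" using c vinner_sym[OF sym, of q p] by simp
    define s where "s = nq *\<^sub>R p + np *\<^sub>R q"
    have ss: "vinner V s s = 2 * np^2 * nq^2 * (1 + x)"
      unfolding s_def vinner_expand[OF sym] np2 nq2 c by (simp add: algebra_simps power2_eq_square)
    show ?thesis
    proof (cases "x = -1")
      case False
      have xg: "x > -1" "x \<le> 1" using bpq False by (auto simp: x_def)
      have npos: "np > 0" "nq > 0" using np nq by (auto simp: np_def nq_def)
      have ssp: "vinner V s s > 0" using ss xg npos by simp
      then have s0: "s \<noteq> 0" by (auto simp: vinner_def)
      have ns: "vnorm V s = sqrt (2 * (1 + x)) * np * nq"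
      proof -
        have "vinner V s s = (2 * (1 + x)) * (np * nq)^2" using ss by (simp add: power2_eq_square)
        then have "vnorm V s = sqrt (2 * (1 + x)) * sqrt ((np * nq)^2)"
          by (simp only: vnorm_def real_sqrt_mult)
        then show ?thesis using npos by simp
      qed
      have sp: "vinner V s p = np^2 * nq * (1 + x)"
        by (simp add: s_def vinner_add_left vinner_scale_left np2 cq algebra_simps power2_eq_square)
      have sq: "vinner V s q = np * nq^2 * (1 + x)"
        by (simp add: s_def vinner_add_left vinner_scale_left nq2 c algebra_simps power2_eq_square)
      have r: "(1 + x) / sqrt (2 * (1 + x)) = sqrt ((1 + x) / 2)"
      proof -
        have "1 + x = sqrt (1 + x) * sqrt (1 + x)" using xg by simp
        moreover have "sqrt (2 * (1 + x)) = sqrt 2 * sqrt (1 + x)" by (simp only: real_sqrt_mult)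
        moreover have "sqrt ((1 + x) / 2) = sqrt (1 + x) / sqrt 2" by (simp add: real_sqrt_divide)
        moreover have "sqrt (1 + x) > 0" using xg by simp
        ultimately show ?thesis by (simp add: field_simps)
      qed
      have v1: "vcos V s p = sqrt ((1 + x) / 2)"
        using npos xg r by (simp add: vcos_def ns sp np_def[symmetric] field_simps power2_eq_square)
      have v2: "vcos V s q = sqrt ((1 + x) / 2)"
        using npos xg r by (simp add: vcos_def ns sq nq_def[symmetric] field_simps power2_eq_square)
      have "arccos (sqrt ((1 + x) / 2)) = \<phi> / 2"
        using half_angle[of x] xg assms(10) by (simp add: vangle_def x_def)
      then show ?thesis using s0 v1 v2 by (auto simp: vangle_def)
    next
      case True
      then have phi: "\<phi> = pi" using assms(10) by (simp add: vangle_def x_def)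
      with h have card: "CARD('p) \<ge> 2" by auto
      have "vinner V s s = 0" using ss True by simp
      then have "s = 0" using vinner_zero[OF pd] by blast
      then have e: "np *\<^sub>R q = - (nq *\<^sub>R p)"
        by (simp add: s_def eq_neg_iff_add_eq_0 add.commute)
      have "q = (1 / np) *\<^sub>R (np *\<^sub>R q)" using np by (simp add: np_def)
      also have "\<dots> = (- nq / np) *\<^sub>R p" by (simp add: e)
      finally have qp: "q = (- nq / np) *\<^sub>R p" .
      obtain y where y: "y \<noteq> 0" "orthogonal (V *v p) y"
        using orthogonal_to_vector_exists[of "V *v p"] card by auto
      have yp: "vinner V y p = 0" using y(2) by (simp add: vinner_def orthogonal_def inner_commute)
      have yq: "vinner V y q = 0" using yp vinner_scale_right[of V y "- nq / np" p] qp by simp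
      show ?thesis using y(1) yp yq phi by (intro exI[of _ y]) (simp add: vangle_def vcos_def)
    qed
  qed
  show ?thesis using part1 part2 by blast
qed

end
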